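(* Let $\tau$ be a nonnegative bipartite quantum correlation measure satisfying the monogamy relation $\tau(\rho_{X_1|X_2\cdots X_N})\geq \tau(\rho_{X_1X_2})+\cdots+\tau(\rho_{X_1X_N})$ for every multipartite state $\rho_{X_1\cdots X_N}$ (with subsystems possibly formed by grouping several parties). Let $\rho_{A_1A_2\cdots A_n}$ be an $n$-partite state, and let $k\geq 1$, $\frac12\leq p\leq 1$, $r\geq 2$, $0\leq\alpha\leq \frac r2$; put $l=\frac{(1+k)^{\alpha/r}-p^{\alpha/r}}{k^{\alpha/r}}$. Write $\tau_{A_1A_i}=\tau(\rho_{A_1A_i})$ and $\tau_{A_1|A_{j+1}\cdots A_n}=\tau(\rho_{A_1|A_{j+1}\cdots A_n})$ (so $\tau_{A_1|A_n}=\tau_{A_1A_n}$). (1) Let $n\geq 4$ and $2\leq m\leq n-2$. If $k\tau^r_{A_1A_i}\leq \tau^r_{A_1|A_{i+1}\cdots A_n}$ for $i=2,\dots,m$ and $\tau^r_{A_1A_j}\geq k\tau^r_{A_1|A_{j+1}\cdots A_n}$ for $j=m+1,\dots,n-1$, then $$\tau^\alpha_{A_1|A_2\cdots A_n}\geq p^{\alpha/r}\big(\tau^\alpha_{A_1A_2}+l\tau^\alpha_{A_1A_3}+\cdots+l^{m-2}\tau^\alpha_{A_1A_m}\big)+l^m\big[\tau^\alpha_{A_1A_{m+1}}+p^{\alpha/r}\tau^\alpha_{A_1A_{m+2}}+\cdots+p^{(n-m-2)\alpha/r}\tau^\alpha_{A_1A_{n-1}}\big]+l^{m-1}p^{(n-m-1)\alpha/r}\tau^\alpha_{A_1A_n}.$$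 (2) Let $n\geq 3$. If $k\tau^r_{A_1A_i}\leq \tau^r_{A_1|A_{i+1}\cdots A_n}$ for $i=2,\dots,n-1$, then $$\tau^\alpha_{A_1|A_2\cdots A_n}\geq p^{\alpha/r}\big(\tau^\alpha_{A_1A_2}+l\tau^\alpha_{A_1A_3}+\cdots+l^{n-3}\tau^\alpha_{A_1A_{n-1}}\big)+l^{n-2}\tau^\alpha_{A_1A_n}.$$ (3) Let $n\geq 3$. If $\tau^r_{A_1A_j}\geq k\tau^r_{A_1|A_{j+1}\cdots A_n}$ for $j=2,\dots,n-1$, then $$\tau^\alpha_{A_1|A_2\cdots A_n}\geq l\big(\tau^\alpha_{A_1A_2}+p^{\alpha/r}\tau^\alpha_{A_1A_3}+\cdots+p^{(n-3)\alpha/r}\tau^\alpha_{A_1A_{n-1}}\big)+p^{(n-2)\alpha/r}\tau^\alpha_{A_1A_n}.$$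
   Context: $\rho_{A_1A_i}$ is the reduced state of $\rho_{A_1\cdots A_n}$ on $A_1A_i$; $\rho_{A_1|A_{j+1}\cdots A_n}$ is the reduced state on $A_1A_{j+1}\cdots A_n$ regarded as a bipartite state for the bipartition $A_1$ versus $A_{j+1}\cdots A_n$; $\rho_{X_1|X_2\cdots X_N}$ similarly denotes the bipartite cut $X_1$ versus $X_2\cdots X_N$. Examples of such $\tau$ mentioned by the paper are the squared concurrence and the squared convex-roof extended negativity. *)

theory Defs
  imports Complex_Main "HOL-Library.Sublist"
begin

text \<open>A system of N parties with local dimensions
  ds (a list of length N) has Hilbert space of dimension prod_list ds; basis indices are
  ordered as in the Kronecker product (party 0 most significant).\<close>

definition is_state :: "nat list \<Rightarrow> (nat \<Rightarrow> nat \<Rightarrow> complex) \<Rightarrow> bool" where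
  "is_state ds \<rho> \<longleftrightarrow>
     (\<forall>i j. (prod_list ds \<le> i \<or> prod_list ds \<le> j) \<longrightarrow> \<rho> i j = 0) \<and>
     (\<forall>i<prod_list ds. \<forall>j<prod_list ds. \<rho> j i = cnj (\<rho> i j)) \<and>
     (\<forall>v :: nat \<Rightarrow> complex.
        0 \<le> Re (\<Sum>i<prod_list ds. \<Sum>j<prod_list ds. cnj (v i) * \<rho> i j * v j)) \<and>
     (\<Sum>i<prod_list ds. \<rho> i i) = 1"

fun decode :: "nat list \<Rightarrow> nat \<Rightarrow> nat list" where
  "decode [] i = []"
| "decode (d # ds) i = (i div prod_list ds) # decode ds (i mod prod_list ds)"

text \<open>Reduced state on the parties in S (kept in their original order): partial trace
  over the complementary parties.\<close>
definition reduce :: "nat list \<Rightarrow> nat set \<Rightarrow> (nat \<Rightarrow> nat \<Rightarrow> complex) \<Rightarrow> (nat \<Rightarrow> nat \<Rightarrow> complex)" where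
  "reduce ds S \<rho> = (\<lambda>a b.
     if a < prod_list (nths ds S) \<and> b < prod_list (nths ds S) then
       (\<Sum>i<prod_list ds. \<Sum>j<prod_list ds.
          if nths (decode ds i) S = decode (nths ds S) a \<and>
             nths (decode ds j) S = decode (nths ds S) b \<and>
             nths (decode ds i) (- S) = nths (decode ds j) (- S)
          then \<rho> i j else 0)
     else 0)"

text \<open>A bipartite measure tau takes the two local dimensions dA, dB and a state on [dA, dB].\<close>

definition nonneg_measure :: "(nat \<Rightarrow> nat \<Rightarrow> (nat \<Rightarrow> nat \<Rightarrow> complex) \<Rightarrow> real) \<Rightarrow> bool" where
  "nonneg_measure \<tau> \<longleftrightarrow> (\<forall>dA dB \<rho>. is_state [dA, dB] \<rho> \<longrightarrow> 0 \<le> \<tau> dA dB \<rho>)"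

text \<open>Monogamy: for every N-partite state on X_1 ... X_N (each X_i of arbitrary dimension,
  so grouped subsystems are included),
  tau(X_1 | X_2...X_N) >= sum_{i=2}^N tau(X_1 X_i).\<close>
definition monogamous :: "(nat \<Rightarrow> nat \<Rightarrow> (nat \<Rightarrow> nat \<Rightarrow> complex) \<Rightarrow> real) \<Rightarrow> bool" where
  "monogamous \<tau> \<longleftrightarrow>
     (\<forall>ds \<rho>. 2 \<le> length ds \<and> is_state ds \<rho> \<longrightarrow>
        (\<Sum>i\<in>{1..<length ds}. \<tau> (ds ! 0) (ds ! i) (reduce ds {0, i} \<rho>))
          \<le> \<tau> (ds ! 0) (prod_list (tl ds)) \<rho>)"

text \<open>For an n-partite state with parties A_1..A_n stored at positions 0..n-1:
  tpair \<tau> ds \<rho> i = tau(rho_{A_1 A_i})   (1-based i),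
  tcut \<tau> ds \<rho> j = tau(rho_{A_1 | A_{j+1} ... A_n}).\<close>
definition tpair :: "(nat \<Rightarrow> nat \<Rightarrow> (nat \<Rightarrow> nat \<Rightarrow> complex) \<Rightarrow> real) \<Rightarrow> nat list \<Rightarrow> (nat \<Rightarrow> nat \<Rightarrow> complex) \<Rightarrow> nat \<Rightarrow> real" where
  "tpair \<tau> ds \<rho> i = \<tau> (ds ! 0) (ds ! (i - 1)) (reduce ds {0, i - 1} \<rho>)"

definition tcut :: "(nat \<Rightarrow> nat \<Rightarrow> (nat \<Rightarrow> nat \<Rightarrow> complex) \<Rightarrow> real) \<Rightarrow> nat list \<Rightarrow> (nat \<Rightarrow> nat \<Rightarrow> complex) \<Rightarrow> nat \<Rightarrow> real" where
  "tcut \<tau> ds \<rho> j = \<tau> (ds ! 0) (prod_list (drop j ds)) (reduce ds (insert 0 {j..<length ds}) \<rho>)"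

end

theory Submission
  imports Defs
begin

lemma bern_powr:
  fixes b s :: real assumes "0 \<le> b" "b \<le> 1" "0 \<le> s"
  shows "(1 + s) powr b \<le> 1 + b * s"
proof -
  have "(\<lambda>t. 1 + b * t - (1 + t) powr b) 0 \<le> (\<lambda>t. 1 + b * t - (1 + t) powr b) s"
  proof (rule DERIV_nonneg_imp_nondecreasing[OF assms(3)])
    fix x :: real assume x: "0 \<le> x" "x \<le> s"
    have "DERIV (\<lambda>t. 1 + b * t - (1 + t) powr b) x :> b - b * (1 + x) powr (b - 1)"
      using x by (auto intro!: derivative_eq_intros)
    moreover have "(1 + x) powr (b - 1) \<le> (1 + x) powr 0"
      using x assms by (intro powr_mono) auto
    hence "b * (1 + x) powr (b - 1) \<le> b" using assms x by (simp add: mult_left_le)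
    ultimately show "\<exists>y. DERIV (\<lambda>t. 1 + b * t - (1 + t) powr b) x :> y \<and> 0 \<le> y" by auto
  qed
  thus ?thesis by simp
qed

lemma l_le_1:
  fixes k p b :: real assumes k: "1 \<le> k" and p: "1/2 \<le> p" "p \<le> 1" and b: "0 \<le> b" "b \<le> 1/2"
  shows "((1 + k) powr b - p powr b) / k powr b \<le> 1"
proof -
  have kp: "0 < k powr b" using k by simp
  have "k * (1 + 1/k) = 1 + k" using k by (simp add: field_simps)
  hence "(1 + k) powr b = (k * (1 + 1/k)) powr b" by simp
  also have "\<dots> = k powr b * (1 + 1/k) powr b" using k by (simp add: powr_mult)
  also have "\<dots> \<le> k powr b * (1 + b * (1/k))"
    using bern_powr[of b "1/k"] k b kp by (intro mult_left_mono) auto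
  also have "\<dots> = k powr b + b * (k powr b / k)" by (simp add: field_simps)
  also have "k powr b / k = k powr (b - 1)" using k by (simp add: powr_diff)
  also have "k powr (b - 1) \<le> k powr 0" using k b by (intro powr_mono) auto
  hence "b * k powr (b - 1) \<le> b" using b k by (simp add: mult_left_le)
  hence "k powr b + b * k powr (b - 1) \<le> k powr b + 1/2" using b by simp
  also have "1/2 \<le> p powr 1" using p by simp
  also have "p powr 1 \<le> p powr b" using p b by (intro powr_mono') auto
  finally have "(1 + k) powr b \<le> k powr b + p powr b" by simp
  thus ?thesis using kp by (simp add: divide_le_eq)
qed

lemma deriv_bound:
  fixes u p b :: real assumes u: "0 < u" "u \<le> 1" and p: "1/2 \<le> p" and b: "0 \<le> b" "b \<le> 1/2"
  shows "(1 + u) powr (b - 1) \<le> p powr b * u powr (b - 1)"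
proof -
  have "u * ((1 + u) / u) = 1 + u" using u by simp
  hence "(1 + u) powr (b - 1) = (u * ((1 + u) / u)) powr (b - 1)" by simp
  also have "\<dots> = u powr (b - 1) * ((1 + u) / u) powr (b - 1)" by (rule powr_mult)
  also have "((1 + u) / u) powr (b - 1) \<le> 2 powr (b - 1)"
    using u b by (intro powr_mono2') (auto simp: field_simps)
  also have "2 powr (b - 1) \<le> (2::real) powr (- b)" using b by (intro powr_mono) auto
  also have "(2::real) powr (- b) = (1/2) powr b" by (simp add: powr_minus powr_divide inverse_eq_divide)
  also have "(1/2) powr b \<le> p powr b" using p b by (intro powr_mono2) auto
  finally show ?thesis using u by (simp add: mult_left_mono mult.commute)
qed

lemma key:
  fixes x y k p b :: real
  assumes y: "0 \<le> y" and xy: "k * y \<le> x" and k: "1 \<le> k" and p: "1/2 \<le> p" "p \<le> 1"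
    and b: "0 \<le> b" "b \<le> 1/2"
  shows "p powr b * y powr b + ((1 + k) powr b - p powr b) / k powr b * x powr b \<le> (x + y) powr b"
proof (cases "y = 0")
  case True
  hence x: "0 \<le> x" using xy by simp
  have "((1 + k) powr b - p powr b) / k powr b * x powr b \<le> 1 * x powr b"
    using l_le_1[OF k p b] by (intro mult_right_mono) auto
  thus ?thesis using True by simp
next
  case False
  hence y: "0 < y" using y by simp
  hence x: "0 < x" using xy k by (smt (verit) mult_pos_pos)
  define s where "s = y / x"
  have s: "0 < s" "s \<le> 1/k" using x y xy k by (auto simp: s_def field_simps)
  have k0: "0 < k" using k by simp
  define g where "g = (\<lambda>t::real. (1 + t) powr b - p powr b * t powr b)"
  have "g (1/k) \<le> g s"
  proof (rule DERIV_nonpos_imp_nonincreasing[OF s(2)])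
    fix u :: real assume u: "s \<le> u" "u \<le> 1/k"
    have u0: "0 < u" using u s by simp
    have "u \<le> k * u" using k u0 by simp
    moreover have "k * u \<le> 1" using u k by (simp add: field_simps)
    ultimately have u0: "0 < u" "u \<le> 1" using u0 by linarith+
    have "DERIV g u :> b * (1 + u) powr (b - 1) - p powr b * (b * u powr (b - 1))"
      unfolding g_def using u0 by (auto intro!: derivative_eq_intros)
    moreover have "b * (1 + u) powr (b - 1) \<le> b * (p powr b * u powr (b - 1))"
      using deriv_bound[OF u0 p(1) b] b by (intro mult_left_mono) auto
    ultimately show "\<exists>y. DERIV g u :> y \<and> y \<le> 0" by (auto simp: algebra_simps)
  qed
  moreover have "g (1/k) = ((1 + k) powr b - p powr b) / k powr b"
  proof -
    have "(1 + 1/k) powr b = (1 + k) powr b / k powr b"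
      using k0 by (simp add: powr_divide[symmetric] field_simps)
    moreover have "(1/k) powr b = 1 / k powr b" using k0 by (simp add: powr_divide)
    ultimately show ?thesis unfolding g_def using k0 by (simp add: field_simps)
  qed
  ultimately have gl: "((1 + k) powr b - p powr b) / k powr b \<le> (1 + s) powr b - p powr b * s powr b"
    unfolding g_def by simp
  have "x * (1 + s) = x + y" using x by (simp add: s_def field_simps)
  hence "(x + y) powr b = (x * (1 + s)) powr b" by simp
  also have "\<dots> = x powr b * (1 + s) powr b" using x s by (simp add: powr_mult)
  finally have e1: "(x + y) powr b = x powr b * (1 + s) powr b" .
  have e2: "y powr b = x powr b * s powr b" using x y by (simp add: s_def powr_divide)
  have "x powr b * (((1 + k) powr b - p powr b) / k powr b) \<le> x powr b * ((1 + s) powr b - p powr b * s powr b)"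
    using gl x by (intro mult_left_mono) auto
  thus ?thesis unfolding e1 e2 by (simp add: algebra_simps)
qed

fun enc :: "nat list \<Rightarrow> nat list \<Rightarrow> nat" where
  "enc [] xs = 0"
| "enc (d # ds) xs = hd xs * prod_list ds + enc ds (tl xs)"

lemma length_decode[simp]: "length (decode ds i) = length ds"
  by (induct ds arbitrary: i) auto

lemma decode_valid: "i < prod_list ds \<Longrightarrow> list_all2 (<) (decode ds i) ds"
proof (induct ds arbitrary: i)
  case Nil then show ?case by simp
next
  case (Cons d ds)
  hence P: "0 < prod_list ds" by (cases "prod_list ds = 0") auto
  have "i div prod_list ds < d" using Cons.prems P by (simp add: div_less_iff_less_mult mult.commute)
  moreover have "i mod prod_list ds < prod_list ds" using P by simp
  ultimately show ?case using Cons.hyps by simp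
qed

lemma enc_decode: "i < prod_list ds \<Longrightarrow> enc ds (decode ds i) = i"
proof (induct ds arbitrary: i)
  case Nil then show ?case by simp
next
  case (Cons d ds)
  hence P: "0 < prod_list ds" by (cases "prod_list ds = 0") auto
  show ?case using Cons.hyps[of "i mod prod_list ds"] P by simp
qed

lemma decode_enc: "list_all2 (<) xs ds \<Longrightarrow> enc ds xs < prod_list ds \<and> decode ds (enc ds xs) = xs"
proof (induct ds arbitrary: xs)
  case Nil then show ?case by simp
next
  case (Cons d ds)
  then obtain x xs' where xs: "xs = x # xs'" "x < d" "list_all2 (<) xs' ds"
    by (cases xs) auto
  from Cons.hyps[OF xs(3)] have h: "enc ds xs' < prod_list ds" "decode ds (enc ds xs') = xs'" by auto
  have "x * prod_list ds + enc ds xs' < (x + 1) * prod_list ds" using h by simp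
  also have "\<dots> \<le> d * prod_list ds" using xs(2) by (intro mult_right_mono) auto
  finally have lt: "x * prod_list ds + enc ds xs' < d * prod_list ds" .
  have "(x * prod_list ds + enc ds xs') div prod_list ds = x" using h by simp
  moreover have "(x * prod_list ds + enc ds xs') mod prod_list ds = enc ds xs'" using h by simp
  ultimately show ?case using lt h xs by simp
qed

lemma decode_inj: "i < prod_list ds \<Longrightarrow> j < prod_list ds \<Longrightarrow> decode ds i = decode ds j \<Longrightarrow> i = j"
  by (metis enc_decode)

lemma nths_eq_iff:
  "length xs = length ys \<Longrightarrow> (nths xs A = nths ys A) = (\<forall>t<length xs. t \<in> A \<longrightarrow> xs ! t = ys ! t)"
proof (induct xs arbitrary: ys A)
  case Nil then show ?case by simp
next
  case (Cons x xs)
  then obtain y ys' where ys: "ys = y # ys'" "length xs = length ys'" by (cases ys) auto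
  have "(nths (x # xs) A = nths (y # ys') A) =
        ((0 \<in> A \<longrightarrow> x = y) \<and> nths xs {j. Suc j \<in> A} = nths ys' {j. Suc j \<in> A})"
    by (auto simp: nths_Cons)
  also have "\<dots> = ((0 \<in> A \<longrightarrow> x = y) \<and> (\<forall>t<length xs. Suc t \<in> A \<longrightarrow> xs ! t = ys' ! t))"
    using Cons.hyps[OF ys(2)] by simp
  also have "\<dots> = (\<forall>t<length (x # xs). t \<in> A \<longrightarrow> (x # xs) ! t = (y # ys') ! t)"
    by (auto simp: less_Suc_eq_0_disj)
  finally show ?case using ys by simp
qed

lemma list_all2_nths: "list_all2 R xs ys \<Longrightarrow> list_all2 R (nths xs A) (nths ys A)"
proof (induct xs arbitrary: ys A)
  case Nil then show ?case by simp
next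
  case (Cons x xs)
  then obtain y ys' where ys: "ys = y # ys'" "R x y" "list_all2 R xs ys'" by (cases ys) auto
  show ?case using Cons.hyps[OF ys(3)] ys by (simp add: nths_Cons)
qed

definition uniq :: "nat \<Rightarrow> nat \<Rightarrow> (nat \<Rightarrow> nat \<Rightarrow> bool) \<Rightarrow> (nat \<Rightarrow> nat) \<Rightarrow> bool" where
  "uniq P P' A \<pi> \<longleftrightarrow> (\<forall>i<P. \<pi> i < P' \<and> (\<forall>a<P'. A i a = (a = \<pi> i)))"

lemma sum_swap4:
  "(\<Sum>x\<in>X. \<Sum>y\<in>Y. \<Sum>i\<in>I. \<Sum>j\<in>J. F x y i j) = (\<Sum>i\<in>I. \<Sum>j\<in>J. \<Sum>x\<in>X. \<Sum>y\<in>Y. F x y i j)"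
proof -
  have "(\<Sum>x\<in>X. \<Sum>y\<in>Y. \<Sum>i\<in>I. \<Sum>j\<in>J. F x y i j) = (\<Sum>x\<in>X. \<Sum>i\<in>I. \<Sum>y\<in>Y. \<Sum>j\<in>J. F x y i j)"
    by (rule sum.cong[OF refl], rule sum.swap)
  also have "\<dots> = (\<Sum>i\<in>I. \<Sum>x\<in>X. \<Sum>y\<in>Y. \<Sum>j\<in>J. F x y i j)" by (rule sum.swap)
  also have "\<dots> = (\<Sum>i\<in>I. \<Sum>x\<in>X. \<Sum>j\<in>J. \<Sum>y\<in>Y. F x y i j)"
    by (rule sum.cong[OF refl], rule sum.cong[OF refl], rule sum.swap)
  also have "\<dots> = (\<Sum>i\<in>I. \<Sum>j\<in>J. \<Sum>x\<in>X. \<Sum>y\<in>Y. F x y i j)"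
    by (rule sum.cong[OF refl], rule sum.swap)
  finally show ?thesis .
qed

lemma collapse2:
  assumes U: "uniq P P' A \<pi>" and i: "i < P" and j: "j < P"
  shows "(\<Sum>x<P'. \<Sum>y<P'. if A i x \<and> A j y then H x y else 0) = H (\<pi> i) (\<pi> j)"
proof -
  have pi: "\<pi> i < P'" "\<pi> j < P'" using U i j by (auto simp: uniq_def)
  have "(\<Sum>x<P'. \<Sum>y<P'. if A i x \<and> A j y then H x y else 0)
      = (\<Sum>x<P'. \<Sum>y<P'. if x = \<pi> i \<and> y = \<pi> j then H x y else 0)"
    using U i j by (intro sum.cong refl) (auto simp: uniq_def)
  also have "\<dots> = (\<Sum>x<P'. if x = \<pi> i then H x (\<pi> j) else 0)"
    using pi by (intro sum.cong refl) (auto simp: if_distrib)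
  also have "\<dots> = H (\<pi> i) (\<pi> j)" using pi by simp
  finally show ?thesis .
qed

lemma quad:
  assumes U: "uniq P P' A \<pi>"
  shows "(\<Sum>x<P'. \<Sum>y<P'. \<Sum>i<P. \<Sum>j<P. if A i x \<and> A j y then H i j x y else (0::'b::comm_monoid_add))
       = (\<Sum>i<P. \<Sum>j<P. H i j (\<pi> i) (\<pi> j))"
proof -
  have "(\<Sum>x<P'. \<Sum>y<P'. \<Sum>i<P. \<Sum>j<P. if A i x \<and> A j y then H i j x y else (0::'b::comm_monoid_add))
       = (\<Sum>i<P. \<Sum>j<P. \<Sum>x<P'. \<Sum>y<P'. if A i x \<and> A j y then H i j x y else 0)"
    by (rule sum_swap4)
  also have "\<dots> = (\<Sum>i<P. \<Sum>j<P. H i j (\<pi> i) (\<pi> j))"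
    by (intro sum.cong refl) (simp add: collapse2[OF U])
  finally show ?thesis .
qed

lemma gen_compose:
  assumes U: "uniq P P' A \<pi>"
  shows "(\<Sum>x<P'. \<Sum>y<P'. if B x y then (\<Sum>i<P. \<Sum>j<P. if A i x \<and> A j y \<and> C i j then \<rho> i j else 0) else 0)
       = (\<Sum>i<P. \<Sum>j<P. if B (\<pi> i) (\<pi> j) \<and> C i j then \<rho> i j else (0::complex))"
proof -
  have "(\<Sum>x<P'. \<Sum>y<P'. if B x y then (\<Sum>i<P. \<Sum>j<P. if A i x \<and> A j y \<and> C i j then \<rho> i j else 0) else 0)
     = (\<Sum>x<P'. \<Sum>y<P'. \<Sum>i<P. \<Sum>j<P. if A i x \<and> A j y then (if B x y \<and> C i j then \<rho> i j else 0) else 0)"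
    by (intro sum.cong refl) (auto intro!: sum.cong sum.neutral)
  also have "\<dots> = (\<Sum>i<P. \<Sum>j<P. if B (\<pi> i) (\<pi> j) \<and> C i j then \<rho> i j else 0)" by (rule quad[OF U])
  finally show ?thesis .
qed

lemma gen_psd:
  fixes g :: "nat \<Rightarrow> 'c"
  assumes U: "uniq P P' A \<pi>"
    and psd: "\<forall>w :: nat \<Rightarrow> complex. 0 \<le> Re (\<Sum>i<P. \<Sum>j<P. cnj (w i) * \<rho> i j * w j)"
  shows "0 \<le> Re (\<Sum>a<P'. \<Sum>b<P'. cnj (v a) * (\<Sum>i<P. \<Sum>j<P. if A i a \<and> A j b \<and> g i = g j then \<rho> i j else 0) * v b)"
proof -
  let ?G = "g ` {..<P}"
  define w where "w c i = (if g i = c then v (\<pi> i) else 0)" for c i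
  have "(\<Sum>a<P'. \<Sum>b<P'. cnj (v a) * (\<Sum>i<P. \<Sum>j<P. if A i a \<and> A j b \<and> g i = g j then \<rho> i j else 0) * v b)
      = (\<Sum>a<P'. \<Sum>b<P'. \<Sum>i<P. \<Sum>j<P. if A i a \<and> A j b then (if g i = g j then cnj (v a) * \<rho> i j * v b else 0) else 0)"
  proof (intro sum.cong refl)
    fix a b
    have "cnj (v a) * (\<Sum>i<P. \<Sum>j<P. if A i a \<and> A j b \<and> g i = g j then \<rho> i j else 0) * v b
       = (\<Sum>i<P. \<Sum>j<P. cnj (v a) * (if A i a \<and> A j b \<and> g i = g j then \<rho> i j else 0) * v b)"
      by (simp add: sum_distrib_left sum_distrib_right)
    also have "\<dots> = (\<Sum>i<P. \<Sum>j<P. if A i a \<and> A j b then (if g i = g j then cnj (v a) * \<rho> i j * v b else 0) else 0)"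
      by (intro sum.cong refl) simp
    finally show "cnj (v a) * (\<Sum>i<P. \<Sum>j<P. if A i a \<and> A j b \<and> g i = g j then \<rho> i j else 0) * v b
       = (\<Sum>i<P. \<Sum>j<P. if A i a \<and> A j b then (if g i = g j then cnj (v a) * \<rho> i j * v b else 0) else 0)" .
  qed
  also have "\<dots> = (\<Sum>i<P. \<Sum>j<P. if g i = g j then cnj (v (\<pi> i)) * \<rho> i j * v (\<pi> j) else 0)"
    by (rule quad[OF U])
  also have "\<dots> = (\<Sum>i<P. \<Sum>j<P. \<Sum>c\<in>?G. cnj (w c i) * \<rho> i j * w c j)"
  proof (intro sum.cong refl)
    fix i j assume i: "i \<in> {..<P}" and j: "j \<in> {..<P}"
    have "(\<Sum>c\<in>?G. cnj (w c i) * \<rho> i j * w c j) = (\<Sum>c\<in>?G. if c = g i then (if g i = g j then cnj (v (\<pi> i)) * \<rho> i j * v (\<pi> j) else 0) else 0)"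
      by (intro sum.cong refl) (auto simp: w_def)
    also have "\<dots> = (if g i = g j then cnj (v (\<pi> i)) * \<rho> i j * v (\<pi> j) else 0)"
    proof -
      have "g i \<in> ?G" using i by blast
      thus ?thesis by (subst sum.delta) auto
    qed
    finally show "(if g i = g j then cnj (v (\<pi> i)) * \<rho> i j * v (\<pi> j) else 0) = (\<Sum>c\<in>?G. cnj (w c i) * \<rho> i j * w c j)" by simp
  qed
  also have "\<dots> = (\<Sum>i<P. \<Sum>c\<in>?G. \<Sum>j<P. cnj (w c i) * \<rho> i j * w c j)"
    by (rule sum.cong[OF refl], rule sum.swap)
  also have "\<dots> = (\<Sum>c\<in>?G. \<Sum>i<P. \<Sum>j<P. cnj (w c i) * \<rho> i j * w c j)"
    by (rule sum.swap)
  finally have e: "(\<Sum>a<P'. \<Sum>b<P'. cnj (v a) * (\<Sum>i<P. \<Sum>j<P. if A i a \<and> A j b \<and> g i = g j then \<rho> i j else 0) * v b)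
     = (\<Sum>c\<in>?G. \<Sum>i<P. \<Sum>j<P. cnj (w c i) * \<rho> i j * w c j)" .
  show ?thesis unfolding e
    apply (subst Re_sum)
    apply (rule sum_nonneg)
    using psd by blast
qed

lemma gen_trace:
  assumes U: "uniq P P' A \<pi>"
    and inj: "\<And>i j. i < P \<Longrightarrow> j < P \<Longrightarrow> \<pi> i = \<pi> j \<Longrightarrow> g i = g j \<Longrightarrow> i = j"
  shows "(\<Sum>a<P'. \<Sum>i<P. \<Sum>j<P. if A i a \<and> A j a \<and> g i = g j then \<rho> i j else 0) = (\<Sum>i<P. \<rho> i i :: complex)"
proof -
  have "(\<Sum>a<P'. \<Sum>i<P. \<Sum>j<P. if A i a \<and> A j a \<and> g i = g j then \<rho> i j else 0)
      = (\<Sum>i<P. \<Sum>a<P'. \<Sum>j<P. if A i a \<and> A j a \<and> g i = g j then \<rho> i j else 0)"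
    by (rule sum.swap)
  also have "\<dots> = (\<Sum>i<P. \<Sum>j<P. \<Sum>a<P'. if A i a \<and> A j a \<and> g i = g j then \<rho> i j else 0)"
    by (rule sum.cong[OF refl], rule sum.swap)
  also have "\<dots> = (\<Sum>i<P. \<Sum>j<P. if i = j then \<rho> i j else 0)"
  proof (intro sum.cong refl)
    fix i j assume i: "i \<in> {..<P}" and j: "j \<in> {..<P}"
    have pi: "\<pi> i < P'" "\<pi> j < P'" using U i j by (auto simp: uniq_def)
    have "(\<Sum>a<P'. if A i a \<and> A j a \<and> g i = g j then \<rho> i j else 0)
        = (\<Sum>a<P'. if a = \<pi> i then (if \<pi> i = \<pi> j \<and> g i = g j then \<rho> i j else 0) else 0)"
      using U i j by (intro sum.cong refl) (auto simp: uniq_def)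
    also have "\<dots> = (if \<pi> i = \<pi> j \<and> g i = g j then \<rho> i j else 0)" using pi by simp
    also have "\<dots> = (if i = j then \<rho> i j else 0)" using inj i j by auto
    finally show "(\<Sum>a<P'. if A i a \<and> A j a \<and> g i = g j then \<rho> i j else 0) = (if i = j then \<rho> i j else 0)" .
  qed
  also have "\<dots> = (\<Sum>i<P. \<rho> i i)" by simp
  finally show ?thesis .
qed

lemma gen_herm:
  assumes herm: "\<forall>i<P. \<forall>j<P. \<rho> j i = cnj (\<rho> i j)"
  shows "(\<Sum>i<P. \<Sum>j<P. if A i b \<and> A j a \<and> g i = g j then \<rho> i j else 0)
       = cnj (\<Sum>i<P. \<Sum>j<P. if A i a \<and> A j b \<and> g i = g j then \<rho> i j else 0)"
proof -
  have "cnj (\<Sum>i<P. \<Sum>j<P. if A i a \<and> A j b \<and> g i = g j then \<rho> i j else 0)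
      = (\<Sum>i<P. \<Sum>j<P. if A i a \<and> A j b \<and> g i = g j then \<rho> j i else 0)"
    unfolding cnj_sum
  proof (intro sum.cong refl)
    fix i j assume i: "i \<in> {..<P}" and j: "j \<in> {..<P}"
    show "cnj (if A i a \<and> A j b \<and> g i = g j then \<rho> i j else 0)
        = (if A i a \<and> A j b \<and> g i = g j then \<rho> j i else 0)"
    proof -
      have "\<rho> j i = cnj (\<rho> i j)" using herm i j by blast
      thus ?thesis by simp
    qed
  qed
  also have "\<dots> = (\<Sum>j<P. \<Sum>i<P. if A i a \<and> A j b \<and> g i = g j then \<rho> j i else 0)"
    by (rule sum.swap)
  also have "\<dots> = (\<Sum>i<P. \<Sum>j<P. if A i b \<and> A j a \<and> g i = g j then \<rho> i j else 0)"
    by (intro sum.cong refl if_cong) auto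
  finally show ?thesis by simp
qed

definition RA where "RA ds S i a \<longleftrightarrow> nths (decode ds i) S = decode (nths ds S) a"
definition Rpi where "Rpi ds S i = enc (nths ds S) (nths (decode ds i) S)"
definition Rg where "Rg ds S i = nths (decode ds i) (- S)"

lemma uniq_R: "uniq (prod_list ds) (prod_list (nths ds S)) (RA ds S) (Rpi ds S)"
  unfolding uniq_def
proof (intro allI impI)
  fix i assume i: "i < prod_list ds"
  have v: "list_all2 (<) (nths (decode ds i) S) (nths ds S)"
    by (rule list_all2_nths[OF decode_valid[OF i]])
  note de = decode_enc[OF v]
  have "\<forall>a<prod_list (nths ds S). RA ds S i a = (a = Rpi ds S i)"
  proof (intro allI impI)
    fix a assume a: "a < prod_list (nths ds S)"
    show "RA ds S i a = (a = Rpi ds S i)"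
      using de decode_inj[OF a, of "Rpi ds S i"] by (auto simp: RA_def Rpi_def)
  qed
  thus "Rpi ds S i < prod_list (nths ds S) \<and> (\<forall>a<prod_list (nths ds S). RA ds S i a = (a = Rpi ds S i))"
    using de by (simp add: Rpi_def)
qed

lemma RA_pi: "i < prod_list ds \<Longrightarrow> RA ds S i (Rpi ds S i)"
  using uniq_R[of ds S] by (auto simp: uniq_def)

lemma Rpi_lt: "i < prod_list ds \<Longrightarrow> Rpi ds S i < prod_list (nths ds S)"
  using uniq_R[of ds S] by (auto simp: uniq_def)

lemma inj_R:
  assumes i: "i < prod_list ds" and j: "j < prod_list ds"
    and e1: "Rpi ds S i = Rpi ds S j" and e2: "Rg ds S i = Rg ds S j"
  shows "i = j"
proof -
  have "nths (decode ds i) S = nths (decode ds j) S"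
    using RA_pi[OF i, of S] RA_pi[OF j, of S] e1 by (simp add: RA_def)
  hence a: "\<forall>t<length ds. t \<in> S \<longrightarrow> decode ds i ! t = decode ds j ! t"
    by (simp add: nths_eq_iff)
  from e2 have b: "\<forall>t<length ds. t \<in> - S \<longrightarrow> decode ds i ! t = decode ds j ! t"
    by (simp add: Rg_def nths_eq_iff)
  have "decode ds i = decode ds j"
    using a b by (intro nth_equalityI) auto
  thus ?thesis using decode_inj i j by blast
qed

lemma reduce_eq:
  "a < prod_list (nths ds S) \<Longrightarrow> b < prod_list (nths ds S) \<Longrightarrow>
   reduce ds S \<rho> a b = (\<Sum>i<prod_list ds. \<Sum>j<prod_list ds.
      if RA ds S i a \<and> RA ds S j b \<and> Rg ds S i = Rg ds S j then \<rho> i j else 0)"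
  by (simp add: reduce_def RA_def Rg_def)

lemma is_state_prod: "prod_list ds1 = prod_list ds2 \<Longrightarrow> is_state ds1 = is_state ds2"
  by (simp add: is_state_def fun_eq_iff)

lemma reduce_state:
  assumes st: "is_state ds \<rho>"
  shows "is_state (nths ds S) (reduce ds S \<rho>)"
proof -
  let ?P = "prod_list ds" and ?Q = "prod_list (nths ds S)"
  note U = uniq_R[of ds S]
  from st have z: "\<forall>i j. (?P \<le> i \<or> ?P \<le> j) \<longrightarrow> \<rho> i j = 0"
    and h: "\<forall>i<?P. \<forall>j<?P. \<rho> j i = cnj (\<rho> i j)"
    and psd: "\<forall>v :: nat \<Rightarrow> complex. 0 \<le> Re (\<Sum>i<?P. \<Sum>j<?P. cnj (v i) * \<rho> i j * v j)"
    and tr: "(\<Sum>i<?P. \<rho> i i) = 1"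
    unfolding is_state_def by blast+
  have 1: "\<forall>a b. (?Q \<le> a \<or> ?Q \<le> b) \<longrightarrow> reduce ds S \<rho> a b = 0"
  proof (intro allI impI)
    fix a b assume "?Q \<le> a \<or> ?Q \<le> b"
    hence "\<not> (a < ?Q \<and> b < ?Q)" by auto
    thus "reduce ds S \<rho> a b = 0" unfolding reduce_def by (rule if_not_P)
  qed
  have 2: "\<forall>a<?Q. \<forall>b<?Q. reduce ds S \<rho> b a = cnj (reduce ds S \<rho> a b)"
  proof (intro allI impI)
    fix a b assume a: "a < ?Q" and b: "b < ?Q"
    show "reduce ds S \<rho> b a = cnj (reduce ds S \<rho> a b)"
      unfolding reduce_eq[OF b a] reduce_eq[OF a b] by (rule gen_herm[OF h])
  qed
  have 3: "0 \<le> Re (\<Sum>a<?Q. \<Sum>b<?Q. cnj (v a) * reduce ds S \<rho> a b * v b)" for v :: "nat \<Rightarrow> complex"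
  proof -
    have "(\<Sum>a<?Q. \<Sum>b<?Q. cnj (v a) * reduce ds S \<rho> a b * v b)
      = (\<Sum>a<?Q. \<Sum>b<?Q. cnj (v a) * (\<Sum>i<?P. \<Sum>j<?P.
      if RA ds S i a \<and> RA ds S j b \<and> Rg ds S i = Rg ds S j then \<rho> i j else 0) * v b)"
      by (intro sum.cong refl) (simp add: reduce_eq)
    thus ?thesis using gen_psd[OF U psd, of v] by (simp only:)
  qed
  have 4: "(\<Sum>a<?Q. reduce ds S \<rho> a a) = 1"
  proof -
    have "(\<Sum>a<?Q. reduce ds S \<rho> a a) = (\<Sum>a<?Q. \<Sum>i<?P. \<Sum>j<?P.
      if RA ds S i a \<and> RA ds S j a \<and> Rg ds S i = Rg ds S j then \<rho> i j else 0)"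
      by (intro sum.cong refl) (simp add: reduce_eq)
    also have "\<dots> = (\<Sum>i<?P. \<rho> i i)"
      by (rule gen_trace[OF U]) (rule inj_R, auto)
    finally show ?thesis using tr by simp
  qed
  show ?thesis unfolding is_state_def using 1 2 3 4 by blast
qed

lemma reduce_full:
  assumes st: "is_state ds \<rho>" and S: "\<forall>t<length ds. t \<in> S"
  shows "reduce ds S \<rho> = \<rho>"
proof (intro ext)
  fix a b
  let ?P = "prod_list ds"
  have nd: "nths ds S = ds" using S by (simp add: nths_all)
  show "reduce ds S \<rho> a b = \<rho> a b"
  proof (cases "a < ?P \<and> b < ?P")
    case True
    have "reduce ds S \<rho> a b = (\<Sum>i<?P. \<Sum>j<?P. if j = b then (if i = a then \<rho> i j else 0) else 0)"
    proof -
      have "reduce ds S \<rho> a b = (\<Sum>i<?P. \<Sum>j<?P.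
         if RA ds S i a \<and> RA ds S j b \<and> Rg ds S i = Rg ds S j then \<rho> i j else 0)"
        using True nd by (simp add: reduce_eq)
      also have "\<dots> = (\<Sum>i<?P. \<Sum>j<?P. if j = b then (if i = a then \<rho> i j else 0) else 0)"
      proof (intro sum.cong refl)
        fix i j assume i: "i \<in> {..<?P}" and j: "j \<in> {..<?P}"
        have "RA ds S i a = (i = a)" using True i decode_inj[of i ds a]
          by (auto simp: RA_def nd nths_all S)
        moreover have "RA ds S j b = (j = b)" using True j decode_inj[of j ds b]
          by (auto simp: RA_def nd nths_all S)
        moreover have "Rg ds S i = Rg ds S j" using S by (simp add: Rg_def nths_eq_iff)
        ultimately show "(if RA ds S i a \<and> RA ds S j b \<and> Rg ds S i = Rg ds S j then \<rho> i j else 0)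
            = (if j = b then (if i = a then \<rho> i j else 0) else 0)" by simp
      qed
      finally show ?thesis .
    qed
    also have "\<dots> = \<rho> a b" using True by simp
    finally show ?thesis .
  next
    case False
    hence "\<not> (a < prod_list (nths ds S) \<and> b < prod_list (nths ds S))" by (simp add: nd)
    hence "reduce ds S \<rho> a b = 0" unfolding reduce_def by (rule if_not_P)
    moreover have "\<rho> a b = 0"
    proof -
      have "\<forall>i j. (?P \<le> i \<or> ?P \<le> j) \<longrightarrow> \<rho> i j = 0" using st unfolding is_state_def by blast
      thus ?thesis using False by auto
    qed
    ultimately show ?thesis by simp
  qed
qed

lemma nths_cong_len: "(\<forall>t<length xs. t \<in> A \<longleftrightarrow> t \<in> B) \<Longrightarrow> nths xs A = nths xs B"
proof (induct xs arbitrary: A B)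
  case Nil then show ?case by simp
next
  case (Cons x xs)
  have "nths xs {j. Suc j \<in> A} = nths xs {j. Suc j \<in> B}"
    using Cons.prems by (intro Cons.hyps) auto
  moreover have "0 \<in> A \<longleftrightarrow> 0 \<in> B" using Cons.prems by auto
  ultimately show ?case by (simp add: nths_Cons)
qed

lemma nths_single: "m < length xs \<Longrightarrow> nths xs {m} = [xs ! m]"
proof (induct xs arbitrary: m)
  case Nil then show ?case by simp
next
  case (Cons x xs)
  show ?case
  proof (cases m)
    case 0 then show ?thesis by (simp add: nths_Cons)
  next
    case (Suc m')
    have "{j. Suc j \<in> {m}} = {m'}" using Suc by auto
    then show ?thesis using Cons Suc by (simp add: nths_Cons)
  qed
qed

lemma nths_pair: "0 < c \<Longrightarrow> c < length xs \<Longrightarrow> nths xs {0, c} = [xs ! 0, xs ! c]"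
proof (cases xs)
  case Nil
  assume "c < length xs" then show ?thesis using Nil by simp
next
  case (Cons x xs')
  assume c: "0 < c" "c < length xs"
  have "{j. Suc j \<in> {0, c}} = {c - 1}" using c by auto
  then show ?thesis using Cons c nths_single[of "c - 1" xs'] by (simp add: nths_Cons)
qed

lemma nths_T: "0 < c \<Longrightarrow> c < length xs \<Longrightarrow> nths xs (insert 0 {c..<length xs}) = xs ! 0 # drop c xs"
proof (cases xs)
  case Nil
  assume "c < length xs" then show ?thesis using Nil by simp
next
  case (Cons x xs')
  assume c: "0 < c" "c < length xs"
  have "nths xs' {j. Suc j \<in> insert 0 {c..<length xs}} = nths xs' {i. c - 1 \<le> i}"
    using c Cons by (intro nths_cong_len) auto
  also have "\<dots> = drop (c - 1) xs'" by (simp add: drop_eq_nths)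
  finally show ?thesis using Cons c by (simp add: nths_Cons drop_Cons')
qed

lemma drop_eq_iff: "length xs = length ys \<Longrightarrow> (drop m xs = drop m ys) = (\<forall>t<length xs. m \<le> t \<longrightarrow> xs ! t = ys ! t)"
  by (simp add: drop_eq_nths nths_eq_iff)

lemma decode3: "decode [d0, dc, prod_list rest] x =
   [x div (dc * prod_list rest), (x mod (dc * prod_list rest)) div prod_list rest, (x mod (dc * prod_list rest)) mod prod_list rest]"
  by simp

lemma decodeT: "decode (d0 # dc # rest) x =
   x div (dc * prod_list rest) # (x mod (dc * prod_list rest)) div prod_list rest # decode rest ((x mod (dc * prod_list rest)) mod prod_list rest)"
  by simp

lemma describe:
  assumes i: "i < prod_list ds" and c: "0 < c" "Suc c < length ds"
  defines "T \<equiv> insert 0 {c..<length ds}"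
  shows "\<exists>M. decode [ds ! 0, ds ! c, prod_list (drop (Suc c) ds)] (Rpi ds T i) =
      [decode ds i ! 0, decode ds i ! c, M] \<and> M < prod_list (drop (Suc c) ds) \<and>
      decode (drop (Suc c) ds) M = drop (Suc c) (decode ds i)"
proof -
  let ?rest = "drop (Suc c) ds" and ?xs = "decode ds i"
  let ?Q = "prod_list ?rest"
  have nT: "nths ds T = ds ! 0 # ds ! c # ?rest"
    using c nths_T[of c ds] by (simp add: T_def Cons_nth_drop_Suc)
  have nTx: "nths ?xs T = ?xs ! 0 # ?xs ! c # drop (Suc c) ?xs"
    using c nths_T[of c ?xs] by (simp add: T_def Cons_nth_drop_Suc)
  define x where "x = Rpi ds T i"
  have xl: "x < prod_list (nths ds T)" using Rpi_lt[OF i] by (simp add: x_def)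
  hence Q: "0 < ?Q" using nT by (cases "?Q = 0") auto
  have "nths ?xs T = decode (nths ds T) x" using RA_pi[OF i, of T] by (simp add: RA_def x_def)
  hence e: "?xs ! 0 # ?xs ! c # drop (Suc c) ?xs = decode (ds ! 0 # ds ! c # ?rest) x"
    using nT nTx by simp
  show ?thesis
    apply (rule exI[of _ "(x mod (ds ! c * ?Q)) mod ?Q"])
    using e Q unfolding decode3 decodeT x_def[symmetric] by simp
qed

lemma comp_gen:
  assumes PT: "prod_list ds' = prod_list (nths ds T)"
    and a: "a < prod_list (nths ds' S')" and b: "b < prod_list (nths ds' S')"
  shows "reduce ds' S' (reduce ds T \<rho>) a b = (\<Sum>i<prod_list ds. \<Sum>j<prod_list ds.
     if (RA ds' S' (Rpi ds T i) a \<and> RA ds' S' (Rpi ds T j) b \<and> Rg ds' S' (Rpi ds T i) = Rg ds' S' (Rpi ds T j))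
        \<and> Rg ds T i = Rg ds T j then \<rho> i j else 0)"
proof -
  have "reduce ds' S' (reduce ds T \<rho>) a b = (\<Sum>x<prod_list (nths ds T). \<Sum>y<prod_list (nths ds T).
      if RA ds' S' x a \<and> RA ds' S' y b \<and> Rg ds' S' x = Rg ds' S' y then reduce ds T \<rho> x y else 0)"
    using a b by (simp add: reduce_eq PT)
  also have "\<dots> = (\<Sum>x<prod_list (nths ds T). \<Sum>y<prod_list (nths ds T).
      if RA ds' S' x a \<and> RA ds' S' y b \<and> Rg ds' S' x = Rg ds' S' y then
       (\<Sum>i<prod_list ds. \<Sum>j<prod_list ds. if RA ds T i x \<and> RA ds T j y \<and> Rg ds T i = Rg ds T j then \<rho> i j else 0) else 0)"
    by (intro sum.cong refl) (simp add: reduce_eq)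
  also have "\<dots> = (\<Sum>i<prod_list ds. \<Sum>j<prod_list ds.
     if (RA ds' S' (Rpi ds T i) a \<and> RA ds' S' (Rpi ds T j) b \<and> Rg ds' S' (Rpi ds T i) = Rg ds' S' (Rpi ds T j))
        \<and> Rg ds T i = Rg ds T j then \<rho> i j else 0)"
    by (rule gen_compose[OF uniq_R])
  finally show ?thesis .
qed

lemma pos_logic1:
  fixes P :: "nat \<Rightarrow> bool"
  shows "((\<forall>t<n. Suc c \<le> t \<longrightarrow> P t) \<and> (\<forall>t<n. t \<in> - insert 0 {c..<n} \<longrightarrow> P t))
     = (\<forall>t<n. t \<in> - {0, c} \<longrightarrow> P t)"
  by (auto simp: not_less_eq_eq)

lemma pos_logic2:
  fixes P :: "nat \<Rightarrow> bool" assumes "0 < c"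
  shows "((\<forall>t<n. t = c \<longrightarrow> P t) \<and> (\<forall>t<n. t \<in> - insert 0 {c..<n} \<longrightarrow> P t))
     = (\<forall>t<n. t \<in> - insert 0 {Suc c..<n} \<longrightarrow> P t)"
  using assms apply (auto simp: not_less_eq_eq)
  by (metis Suc_leI le_neq_implies_less)

lemma comp_a:
  assumes c: "0 < c" "Suc c < length ds"
  shows "reduce [ds ! 0, ds ! c, prod_list (drop (Suc c) ds)] {0, 1} (reduce ds (insert 0 {c..<length ds}) \<rho>)
       = reduce ds {0, c} \<rho>"
proof (intro ext)
  fix a b
  define T where "T = insert 0 {c..<length ds}"
  define ds' where "ds' = [ds ! 0, ds ! c, prod_list (drop (Suc c) ds)]"
  let ?rest = "drop (Suc c) ds"
  have nT: "nths ds T = ds ! 0 # ds ! c # ?rest"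
    using c nths_T[of c ds] by (simp add: T_def Cons_nth_drop_Suc)
  have PT: "prod_list ds' = prod_list (nths ds T)" by (simp add: nT ds'_def)
  have n01: "nths ds' {0, 1} = [ds ! 0, ds ! c]" by (simp add: ds'_def nths_Cons)
  have n0c: "nths ds {0, c} = [ds ! 0, ds ! c]" using c by (intro nths_pair) auto
  show "reduce ds' {0, 1} (reduce ds T \<rho>) a b = reduce ds {0, c} \<rho> a b"
  proof (cases "a < prod_list [ds ! 0, ds ! c] \<and> b < prod_list [ds ! 0, ds ! c]")
    case True
    have a: "a < prod_list (nths ds' {0, 1})" and b: "b < prod_list (nths ds' {0, 1})"
      using True n01 by auto
    have a': "a < prod_list (nths ds {0, c})" and b': "b < prod_list (nths ds {0, c})"
      using True n0c by auto
    show ?thesis unfolding comp_gen[OF PT a b] reduce_eq[OF a' b']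
    proof (intro sum.cong refl)
      fix i j assume i: "i \<in> {..<prod_list ds}" and j: "j \<in> {..<prod_list ds}"
      let ?xs = "decode ds i" and ?ys = "decode ds j"
      obtain Mi where Mi: "decode ds' (Rpi ds T i) = [?xs ! 0, ?xs ! c, Mi]" "Mi < prod_list ?rest"
          "decode ?rest Mi = drop (Suc c) ?xs"
        using describe[of i ds c] i c by (auto simp: T_def ds'_def)
      obtain Mj where Mj: "decode ds' (Rpi ds T j) = [?ys ! 0, ?ys ! c, Mj]" "Mj < prod_list ?rest"
          "decode ?rest Mj = drop (Suc c) ?ys"
        using describe[of j ds c] j c by (auto simp: T_def ds'_def)
      have nx: "nths ?xs {0, c} = [?xs ! 0, ?xs ! c]" using c by (intro nths_pair) auto
      have ny: "nths ?ys {0, c} = [?ys ! 0, ?ys ! c]" using c by (intro nths_pair) auto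
      have e1: "RA ds' {0, 1} (Rpi ds T i) a = RA ds {0, c} i a"
        unfolding RA_def Mi(1) n01 n0c nx by (simp add: nths_Cons)
      have e2: "RA ds' {0, 1} (Rpi ds T j) b = RA ds {0, c} j b"
        unfolding RA_def Mj(1) n01 n0c ny by (simp add: nths_Cons)
      have "(Rg ds' {0, 1} (Rpi ds T i) = Rg ds' {0, 1} (Rpi ds T j)) = (Mi = Mj)"
        unfolding Rg_def Mi(1) Mj(1) by (simp add: nths_Cons)
      also have "\<dots> = (drop (Suc c) ?xs = drop (Suc c) ?ys)"
        using Mi Mj decode_inj[of Mi ?rest Mj] by auto
      also have "\<dots> = (\<forall>t<length ds. Suc c \<le> t \<longrightarrow> ?xs ! t = ?ys ! t)"
        by (simp add: drop_eq_iff)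
      finally have g1: "(Rg ds' {0, 1} (Rpi ds T i) = Rg ds' {0, 1} (Rpi ds T j)) =
          (\<forall>t<length ds. Suc c \<le> t \<longrightarrow> ?xs ! t = ?ys ! t)" .
      have g2: "(Rg ds T i = Rg ds T j) = (\<forall>t<length ds. t \<in> - T \<longrightarrow> ?xs ! t = ?ys ! t)"
        by (simp add: Rg_def nths_eq_iff)
      have g3: "(Rg ds {0, c} i = Rg ds {0, c} j) = (\<forall>t<length ds. t \<in> - {0, c} \<longrightarrow> ?xs ! t = ?ys ! t)"
        by (simp add: Rg_def nths_eq_iff)
      have g: "((Rg ds' {0, 1} (Rpi ds T i) = Rg ds' {0, 1} (Rpi ds T j)) \<and> Rg ds T i = Rg ds T j)
           = (Rg ds {0, c} i = Rg ds {0, c} j)"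
        unfolding g1 g2 g3 unfolding T_def by (rule pos_logic1)
      show "(if (RA ds' {0, 1} (Rpi ds T i) a \<and> RA ds' {0, 1} (Rpi ds T j) b \<and>
              Rg ds' {0, 1} (Rpi ds T i) = Rg ds' {0, 1} (Rpi ds T j)) \<and> Rg ds T i = Rg ds T j
             then \<rho> i j else 0) =
            (if RA ds {0, c} i a \<and> RA ds {0, c} j b \<and> Rg ds {0, c} i = Rg ds {0, c} j then \<rho> i j else 0)"
        using e1 e2 g by auto
    qed
  next
    case False
    hence X: "\<not> (a < prod_list (nths ds' {0, 1}) \<and> b < prod_list (nths ds' {0, 1}))"
      and Y: "\<not> (a < prod_list (nths ds {0, c}) \<and> b < prod_list (nths ds {0, c}))"
      using n01 n0c by auto
    have "reduce ds' {0, 1} (reduce ds T \<rho>) a b = 0" unfolding reduce_def by (rule if_not_P[OF X])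
    moreover have "reduce ds {0, c} \<rho> a b = 0" unfolding reduce_def by (rule if_not_P[OF Y])
    ultimately show ?thesis by simp
  qed
qed

lemma comp_b:
  assumes c: "0 < c" "Suc c < length ds"
  shows "reduce [ds ! 0, ds ! c, prod_list (drop (Suc c) ds)] {0, 2} (reduce ds (insert 0 {c..<length ds}) \<rho>)
       = reduce ds (insert 0 {Suc c..<length ds}) \<rho>"
proof (intro ext)
  fix a b
  define T where "T = insert 0 {c..<length ds}"
  define S2 where "S2 = insert 0 {Suc c..<length ds}"
  define ds' where "ds' = [ds ! 0, ds ! c, prod_list (drop (Suc c) ds)]"
  let ?rest = "drop (Suc c) ds"
  let ?Q = "prod_list ?rest"
  have nT: "nths ds T = ds ! 0 # ds ! c # ?rest"
    using c nths_T[of c ds] by (simp add: T_def Cons_nth_drop_Suc)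
  have PT: "prod_list ds' = prod_list (nths ds T)" by (simp add: nT ds'_def)
  have n02: "nths ds' {0, 2} = [ds ! 0, ?Q]" by (simp add: ds'_def nths_Cons)
  have nS: "nths ds S2 = ds ! 0 # ?rest" using c nths_T[of "Suc c" ds] by (simp add: S2_def)
  show "reduce ds' {0, 2} (reduce ds T \<rho>) a b = reduce ds S2 \<rho> a b"
  proof (cases "a < prod_list [ds ! 0, ?Q] \<and> b < prod_list [ds ! 0, ?Q]")
    case True
    have a: "a < prod_list (nths ds' {0, 2})" and b: "b < prod_list (nths ds' {0, 2})"
      using True n02 by auto
    have a': "a < prod_list (nths ds S2)" and b': "b < prod_list (nths ds S2)"
      using True nS by auto
    have Q: "0 < ?Q" using True by (cases "?Q = 0") auto
    show ?thesis unfolding comp_gen[OF PT a b] reduce_eq[OF a' b']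
    proof (intro sum.cong refl)
      fix i j assume i: "i \<in> {..<prod_list ds}" and j: "j \<in> {..<prod_list ds}"
      let ?xs = "decode ds i" and ?ys = "decode ds j"
      obtain Mi where Mi: "decode ds' (Rpi ds T i) = [?xs ! 0, ?xs ! c, Mi]" "Mi < prod_list ?rest"
          "decode ?rest Mi = drop (Suc c) ?xs"
        using describe[of i ds c] i c by (auto simp: T_def ds'_def)
      obtain Mj where Mj: "decode ds' (Rpi ds T j) = [?ys ! 0, ?ys ! c, Mj]" "Mj < prod_list ?rest"
          "decode ?rest Mj = drop (Suc c) ?ys"
        using describe[of j ds c] j c by (auto simp: T_def ds'_def)
      have nx: "nths ?xs S2 = ?xs ! 0 # drop (Suc c) ?xs" using c nths_T[of "Suc c" ?xs] by (simp add: S2_def)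
      have ny: "nths ?ys S2 = ?ys ! 0 # drop (Suc c) ?ys" using c nths_T[of "Suc c" ?ys] by (simp add: S2_def)
      have amod: "a mod ?Q < ?Q" "b mod ?Q < ?Q" using Q by auto
      have e1: "RA ds' {0, 2} (Rpi ds T i) a = RA ds S2 i a"
        unfolding RA_def Mi(1) n02 nS nx
        using Mi(2,3) amod decode_inj[of Mi ?rest "a mod ?Q"] by (auto simp: nths_Cons)
      have e2: "RA ds' {0, 2} (Rpi ds T j) b = RA ds S2 j b"
        unfolding RA_def Mj(1) n02 nS ny
        using Mj(2,3) amod decode_inj[of Mj ?rest "b mod ?Q"] by (auto simp: nths_Cons)
      have "(Rg ds' {0, 2} (Rpi ds T i) = Rg ds' {0, 2} (Rpi ds T j)) = (?xs ! c = ?ys ! c)"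
        unfolding Rg_def Mi(1) Mj(1) by (simp add: nths_Cons)
      also have "\<dots> = (\<forall>t<length ds. t = c \<longrightarrow> ?xs ! t = ?ys ! t)" using c by auto
      finally have g1: "(Rg ds' {0, 2} (Rpi ds T i) = Rg ds' {0, 2} (Rpi ds T j)) =
          (\<forall>t<length ds. t = c \<longrightarrow> ?xs ! t = ?ys ! t)" .
      have g2: "(Rg ds T i = Rg ds T j) = (\<forall>t<length ds. t \<in> - T \<longrightarrow> ?xs ! t = ?ys ! t)"
        by (simp add: Rg_def nths_eq_iff)
      have g3: "(Rg ds S2 i = Rg ds S2 j) = (\<forall>t<length ds. t \<in> - S2 \<longrightarrow> ?xs ! t = ?ys ! t)"
        by (simp add: Rg_def nths_eq_iff)
      have g: "((Rg ds' {0, 2} (Rpi ds T i) = Rg ds' {0, 2} (Rpi ds T j)) \<and> Rg ds T i = Rg ds T j)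
           = (Rg ds S2 i = Rg ds S2 j)"
        unfolding g1 g2 g3 unfolding T_def S2_def by (rule pos_logic2[OF c(1)])
      show "(if (RA ds' {0, 2} (Rpi ds T i) a \<and> RA ds' {0, 2} (Rpi ds T j) b \<and>
              Rg ds' {0, 2} (Rpi ds T i) = Rg ds' {0, 2} (Rpi ds T j)) \<and> Rg ds T i = Rg ds T j
             then \<rho> i j else 0) =
            (if RA ds S2 i a \<and> RA ds S2 j b \<and> Rg ds S2 i = Rg ds S2 j then \<rho> i j else 0)"
        using e1 e2 g by auto
    qed
  next
    case False
    hence X: "\<not> (a < prod_list (nths ds' {0, 2}) \<and> b < prod_list (nths ds' {0, 2}))"
      and Y: "\<not> (a < prod_list (nths ds S2) \<and> b < prod_list (nths ds S2))"
      using n02 nS by auto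
    have "reduce ds' {0, 2} (reduce ds T \<rho>) a b = 0" unfolding reduce_def by (rule if_not_P[OF X])
    moreover have "reduce ds S2 \<rho> a b = 0" unfolding reduce_def by (rule if_not_P[OF Y])
    ultimately show ?thesis by simp
  qed
qed

lemma superadd:
  fixes a b r :: real assumes a: "0 \<le> a" and b: "0 \<le> b" and r: "1 \<le> r"
  shows "a powr r + b powr r \<le> (a + b) powr r"
proof (cases "a + b = 0")
  case True
  hence "a = 0" "b = 0" using a b by auto
  thus ?thesis by simp
next
  case False
  define s where "s = a + b"
  have s: "0 < s" using False a b by (simp add: s_def)
  have "a powr r = (s * (a / s)) powr r" using s by simp
  also have "\<dots> = s powr r * (a / s) powr r" by (rule powr_mult)
  also have "(a / s) powr r \<le> (a / s) powr 1" using a b s r by (intro powr_mono') (auto simp: s_def field_simps)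
  finally have A: "a powr r \<le> s powr r * (a / s)" using s a by (simp add: mult_left_mono)
  have "b powr r = (s * (b / s)) powr r" using s by simp
  also have "\<dots> = s powr r * (b / s) powr r" by (rule powr_mult)
  also have "(b / s) powr r \<le> (b / s) powr 1" using a b s r by (intro powr_mono') (auto simp: s_def field_simps)
  finally have B: "b powr r \<le> s powr r * (b / s)" using s b by (simp add: mult_left_mono)
  have "a / s + b / s = 1" using s by (simp add: s_def add_divide_distrib[symmetric])
  hence "s powr r * (a / s) + s powr r * (b / s) = s powr r" by (metis distrib_left mult_1_right)
  thus ?thesis using A B by (simp add: s_def)
qed

lemma powr_nat_mult:
  fixes p :: real assumes "0 < p"
  shows "p powr (real m * \<alpha> / r) = (p powr (\<alpha> / r)) ^ m"
proof -
  have "(p powr (\<alpha> / r)) ^ m = (p powr (\<alpha> / r)) powr (real m)"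
    using assms by (simp add: powr_realpow)
  also have "\<dots> = p powr (\<alpha> / r * real m)" by (simp add: powr_powr)
  finally show ?thesis by (simp add: mult.commute)
qed

lemma chainA:
  fixes E P :: "nat \<Rightarrow> real"
  assumes l: "0 \<le> l" and q: "2 \<le> q"
    and st: "\<And>i. 2 \<le> i \<Longrightarrow> i \<le> q \<Longrightarrow> a * P i + l * E i \<le> E (i - 1)"
  shows "a * (\<Sum>i=2..q. l ^ (i - 2) * P i) + l ^ (q - 1) * E q \<le> E 1"
  using q st
proof (induction q rule: dec_induct)
  case base
  thus ?case using st[of 2] by simp
next
  case (step q)
  have IH: "a * (\<Sum>i=2..q. l ^ (i - 2) * P i) + l ^ (q - 1) * E q \<le> E 1"
    using step by auto
  have s: "a * P (Suc q) + l * E (Suc q) \<le> E q" using step.prems[of "Suc q"] step.hyps by simp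
  have "l ^ (q - 1) * (a * P (Suc q) + l * E (Suc q)) \<le> l ^ (q - 1) * E q"
    using s l by (intro mult_left_mono) auto
  moreover have "(\<Sum>i=2..Suc q. l ^ (i - 2) * P i) = (\<Sum>i=2..q. l ^ (i - 2) * P i) + l ^ (q - 1) * P (Suc q)"
    using step.hyps by (simp add: Suc_diff_le numeral_2_eq_2)
  moreover have "l ^ (Suc q - 1) = l ^ (q - 1) * l"
  proof -
    obtain q' where "q = Suc q'" using step.hyps by (cases q) auto
    thus ?thesis by (simp add: power_Suc2)
  qed
  ultimately show ?case using IH by (simp add: algebra_simps)
qed

lemma chainB:
  fixes E P :: "nat \<Rightarrow> real"
  assumes a: "0 \<le> a" and q: "c \<le> q"
    and st: "\<And>j. c + 1 \<le> j \<Longrightarrow> j \<le> q \<Longrightarrow> l * P j + a * E j \<le> E (j - 1)"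
  shows "l * (\<Sum>j=c+1..q. a ^ (j - c - 1) * P j) + a ^ (q - c) * E q \<le> E c"
  using q st
proof (induction q rule: dec_induct)
  case base
  thus ?case by simp
next
  case (step q)
  have IH: "l * (\<Sum>j=c+1..q. a ^ (j - c - 1) * P j) + a ^ (q - c) * E q \<le> E c"
    using step by auto
  have s: "l * P (Suc q) + a * E (Suc q) \<le> E q" using step.prems[of "Suc q"] step.hyps by simp
  have "a ^ (q - c) * (l * P (Suc q) + a * E (Suc q)) \<le> a ^ (q - c) * E q"
    using s a by (intro mult_left_mono) auto
  moreover have "(\<Sum>j=c+1..Suc q. a ^ (j - c - 1) * P j) = (\<Sum>j=c+1..q. a ^ (j - c - 1) * P j) + a ^ (q - c) * P (Suc q)"
    using step.hyps by simp
  moreover have "a ^ (Suc q - c) = a ^ (q - c) * a" using step.hyps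
    by (simp add: Suc_diff_le power_Suc2)
  ultimately show ?case using IH by (simp add: algebra_simps)
qed

lemma cut_state:
  assumes st: "is_state ds \<rho>" and c: "0 < c" "c < length ds"
  shows "is_state [ds ! 0, prod_list (drop c ds)] (reduce ds (insert 0 {c..<length ds}) \<rho>)"
proof -
  have "nths ds (insert 0 {c..<length ds}) = ds ! 0 # drop c ds" using c by (rule nths_T)
  hence "prod_list [ds ! 0, prod_list (drop c ds)] = prod_list (nths ds (insert 0 {c..<length ds}))" by simp
  thus ?thesis using reduce_state[OF st] is_state_prod by metis
qed

lemma pair_state:
  assumes st: "is_state ds \<rho>" and c: "0 < c" "c < length ds"
  shows "is_state [ds ! 0, ds ! c] (reduce ds {0, c} \<rho>)"
  using reduce_state[OF st, of "{0, c}"] nths_pair[OF c] by simp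

lemma mono_step:
  assumes mono: "monogamous \<tau>" and st: "is_state ds \<rho>" and c: "0 < c" "Suc c < length ds"
  shows "tpair \<tau> ds \<rho> (Suc c) + tcut \<tau> ds \<rho> (Suc c) \<le> tcut \<tau> ds \<rho> c"
proof -
  define ds' where "ds' = [ds ! 0, ds ! c, prod_list (drop (Suc c) ds)]"
  define \<sigma> where "\<sigma> = reduce ds (insert 0 {c..<length ds}) \<rho>"
  have dc: "drop c ds = ds ! c # drop (Suc c) ds" using c by (simp add: Cons_nth_drop_Suc)
  have s1: "is_state [ds ! 0, prod_list (drop c ds)] \<sigma>" unfolding \<sigma>_def using st c by (intro cut_state) auto
  have "prod_list [ds ! 0, prod_list (drop c ds)] = prod_list ds'" by (simp add: ds'_def dc)
  hence s2: "is_state ds' \<sigma>" using s1 is_state_prod by metis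
  have "(\<Sum>i\<in>{1..<length ds'}. \<tau> (ds' ! 0) (ds' ! i) (reduce ds' {0, i} \<sigma>))
          \<le> \<tau> (ds' ! 0) (prod_list (tl ds')) \<sigma>"
  proof -
    have "2 \<le> length ds' \<and> is_state ds' \<sigma>" using s2 by (simp add: ds'_def)
    thus ?thesis using mono unfolding monogamous_def by blast
  qed
  moreover have "{1..<length ds'} = {1, 2}" by (auto simp: ds'_def)
  ultimately have M: "\<tau> (ds' ! 0) (ds' ! 1) (reduce ds' {0, 1} \<sigma>) + \<tau> (ds' ! 0) (ds' ! 2) (reduce ds' {0, 2} \<sigma>)
      \<le> \<tau> (ds' ! 0) (prod_list (tl ds')) \<sigma>" by simp
  have f: "ds' ! 0 = ds ! 0" "ds' ! 1 = ds ! c" "ds' ! 2 = prod_list (drop (Suc c) ds)"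
    "prod_list (tl ds') = prod_list (drop c ds)" by (simp_all add: ds'_def dc)
  note M = M[unfolded f]
  have "reduce ds' {0, 1} \<sigma> = reduce ds {0, c} \<rho>" unfolding ds'_def \<sigma>_def by (rule comp_a[OF c])
  moreover have "reduce ds' {0, 2} \<sigma> = reduce ds (insert 0 {Suc c..<length ds}) \<rho>"
    unfolding ds'_def \<sigma>_def by (rule comp_b[OF c])
  ultimately show ?thesis using M by (simp add: tpair_def tcut_def \<sigma>_def)
qed

lemma last_cut:
  assumes n: "2 \<le> length ds"
  shows "tcut \<tau> ds \<rho> (length ds - 1) = tpair \<tau> ds \<rho> (length ds)"
proof -
  have "drop (length ds - 1) ds = [ds ! (length ds - 1)]" using n
    by (metis Cons_nth_drop_Suc Suc_diff_1 diff_less drop_all le_refl less_le_trans pos2 zero_less_one)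
  moreover have "insert 0 {length ds - 1..<length ds} = {0, length ds - 1}" using n by auto
  ultimately show ?thesis by (simp add: tpair_def tcut_def)
qed

theorem corollary1:
  fixes \<tau> :: "nat \<Rightarrow> nat \<Rightarrow> (nat \<Rightarrow> nat \<Rightarrow> complex) \<Rightarrow> real"
    and ds :: "nat list" and \<rho> :: "nat \<Rightarrow> nat \<Rightarrow> complex"
    and n m :: nat and k p r \<alpha> l :: real
  assumes nonneg: "nonneg_measure \<tau>"
    and mono: "monogamous \<tau>"
    and state: "is_state ds \<rho>" and len: "length ds = n"
    and k: "1 \<le> k" and p: "1/2 \<le> p" "p \<le> 1" and r: "2 \<le> r"
    and \<alpha>: "0 \<le> \<alpha>" "\<alpha> \<le> r / 2"
    and l_def: "l = ((1 + k) powr (\<alpha> / r) - p powr (\<alpha> / r)) / k powr (\<alpha> / r)"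
  shows
   "(4 \<le> n \<and> 2 \<le> m \<and> m \<le> n - 2 \<and>
     (\<forall>i\<in>{2..m}. k * tpair \<tau> ds \<rho> i powr r \<le> tcut \<tau> ds \<rho> i powr r) \<and>
     (\<forall>j\<in>{m+1..n-1}. k * tcut \<tau> ds \<rho> j powr r \<le> tpair \<tau> ds \<rho> j powr r) \<longrightarrow>
     tcut \<tau> ds \<rho> 1 powr \<alpha> \<ge>
        p powr (\<alpha> / r) * (\<Sum>i=2..m. l ^ (i - 2) * tpair \<tau> ds \<rho> i powr \<alpha>)
      + l ^ m * (\<Sum>j=m+1..n-1. p powr (real (j - m - 1) * \<alpha> / r) * tpair \<tau> ds \<rho> j powr \<alpha>)
      + l ^ (m - 1) * p powr (real (n - m - 1) * \<alpha> / r) * tpair \<tau> ds \<rho> n powr \<alpha>)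
  \<and>
   (3 \<le> n \<and> (\<forall>i\<in>{2..n-1}. k * tpair \<tau> ds \<rho> i powr r \<le> tcut \<tau> ds \<rho> i powr r) \<longrightarrow>
     tcut \<tau> ds \<rho> 1 powr \<alpha> \<ge>
        p powr (\<alpha> / r) * (\<Sum>i=2..n-1. l ^ (i - 2) * tpair \<tau> ds \<rho> i powr \<alpha>)
      + l ^ (n - 2) * tpair \<tau> ds \<rho> n powr \<alpha>)
  \<and>
   (3 \<le> n \<and> (\<forall>j\<in>{2..n-1}. k * tcut \<tau> ds \<rho> j powr r \<le> tpair \<tau> ds \<rho> j powr r) \<longrightarrow>
     tcut \<tau> ds \<rho> 1 powr \<alpha> \<ge>
        l * (\<Sum>j=2..n-1. p powr (real (j - 2) * \<alpha> / r) * tpair \<tau> ds \<rho> j powr \<alpha>)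
      + p powr (real (n - 2) * \<alpha> / r) * tpair \<tau> ds \<rho> n powr \<alpha>)"
proof -
  let ?C = "tcut \<tau> ds \<rho>" and ?R = "tpair \<tau> ds \<rho>"
  define \<beta> where "\<beta> = \<alpha> / r"
  define a where "a = p powr \<beta>"
  define E where "E c = ?C c powr \<alpha>" for c
  define P where "P i = ?R i powr \<alpha>" for i
  have r0: "0 < r" using r by simp
  have b: "0 \<le> \<beta>" "\<beta> \<le> 1/2" using \<alpha> r0 by (auto simp: \<beta>_def field_simps)
  have p0: "0 < p" using p by simp
  have a0: "0 \<le> a" by (simp add: a_def)
  have l_def': "l = ((1 + k) powr \<beta> - p powr \<beta>) / k powr \<beta>" using l_def by (simp add: \<beta>_def)
  have l0: "0 \<le> l"
  proof -
    have "p powr \<beta> \<le> (1 + k) powr \<beta>" using p k b by (intro powr_mono2) auto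
    thus ?thesis unfolding l_def' using k by simp
  qed
  have rb: "r * \<beta> = \<alpha>" using r0 by (simp add: \<beta>_def)
  have pw: "(x powr r) powr \<beta> = x powr \<alpha>" for x :: real by (simp add: powr_powr rb)
  have cut_nn: "0 \<le> ?C c" if "0 < c" "c < n" for c
    using nonneg cut_state[OF state, of c] that len unfolding nonneg_measure_def tcut_def by auto
  have pair_nn: "0 \<le> ?R i" if "2 \<le> i" "i \<le> n" for i
  proof -
    have "is_state [ds ! 0, ds ! (i - 1)] (reduce ds {0, i - 1} \<rho>)"
      using pair_state[OF state, of "i - 1"] that len by auto
    thus ?thesis using nonneg unfolding nonneg_measure_def tpair_def by auto
  qed
  have base: "(?R i powr r + ?C i powr r) powr \<beta> \<le> E (i - 1)" if "2 \<le> i" "i \<le> n - 1" for i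
  proof -
    define c where "c = i - 1"
    have c: "i = Suc c" "0 < c" "Suc c < length ds" using that len by (simp_all add: c_def)
    have ms: "?R i + ?C i \<le> ?C (i - 1)" using mono_step[OF mono state c(2,3)] c by simp
    have nn: "0 \<le> ?R i" "0 \<le> ?C i" using pair_nn[of i] cut_nn[of i] that c len by auto
    have "?R i powr r + ?C i powr r \<le> (?R i + ?C i) powr r" using nn r by (intro superadd) auto
    also have "\<dots> \<le> ?C (i - 1) powr r" using ms nn r by (intro powr_mono2) auto
    finally have "(?R i powr r + ?C i powr r) powr \<beta> \<le> (?C (i - 1) powr r) powr \<beta>"
      using b by (intro powr_mono2) auto
    thus ?thesis by (simp add: pw E_def)
  qed
  have stepA: "a * P i + l * E i \<le> E (i - 1)"
    if "2 \<le> i" "i \<le> n - 1" "k * ?R i powr r \<le> ?C i powr r" for i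
  proof -
    have "a * (?R i powr r) powr \<beta> + l * (?C i powr r) powr \<beta> \<le> (?C i powr r + ?R i powr r) powr \<beta>"
      unfolding a_def l_def' using key[OF _ that(3) k p b] by simp
    thus ?thesis using base[OF that(1,2)] by (simp add: pw E_def P_def add.commute)
  qed
  have stepB: "l * P j + a * E j \<le> E (j - 1)"
    if "2 \<le> j" "j \<le> n - 1" "k * ?C j powr r \<le> ?R j powr r" for j
  proof -
    have "a * (?C j powr r) powr \<beta> + l * (?R j powr r) powr \<beta> \<le> (?R j powr r + ?C j powr r) powr \<beta>"
      unfolding a_def l_def' using key[OF _ that(3) k p b] by simp
    thus ?thesis using base[OF that(1,2)] by (simp add: pw E_def P_def add.commute)
  qed
  have lastc: "E (n - 1) = P n" if "2 \<le> n" using last_cut[of ds \<tau> \<rho>] that len by (simp add: E_def P_def)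
  have pa: "p powr (real m * \<alpha> / r) = a ^ m" for m using powr_nat_mult[OF p0] by (simp add: a_def \<beta>_def)
  show ?thesis
  proof (intro conjI impI)
    assume h: "4 \<le> n \<and> 2 \<le> m \<and> m \<le> n - 2 \<and>
     (\<forall>i\<in>{2..m}. k * ?R i powr r \<le> ?C i powr r) \<and>
     (\<forall>j\<in>{m+1..n-1}. k * ?C j powr r \<le> ?R j powr r)"
    have A: "a * (\<Sum>i=2..m. l ^ (i - 2) * P i) + l ^ (m - 1) * E m \<le> E 1"
    proof (rule chainA[OF l0])
      show "2 \<le> m" using h by simp
      fix i assume "2 \<le> i" "i \<le> m"
      thus "a * P i + l * E i \<le> E (i - 1)" using h by (intro stepA) auto
    qed
    have B: "l * (\<Sum>j=m+1..n-1. a ^ (j - m - 1) * P j) + a ^ (n - 1 - m) * E (n - 1) \<le> E m"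
    proof (rule chainB[OF a0])
      show "m \<le> n - 1" using h by linarith
      fix j assume "m + 1 \<le> j" "j \<le> n - 1"
      thus "l * P j + a * E j \<le> E (j - 1)" using h by (intro stepB) auto
    qed
    define S where "S = (\<Sum>j=m+1..n-1. a ^ (j - m - 1) * P j)"
    have X: "l ^ (m - 1) * (l * S + a ^ (n - 1 - m) * E (n - 1)) \<le> l ^ (m - 1) * E m"
      using B l0 unfolding S_def by (intro mult_left_mono) auto
    have lm: "l ^ (m - 1) * l = l ^ m"
    proof -
      obtain m' where "m = Suc m'" using h by (cases m) auto
      thus ?thesis by (simp add: power_Suc2)
    qed
    have En: "E (n - 1) = P n" using h by (intro lastc) auto
    have nm: "n - 1 - m = n - m - 1" by simp
    have "l ^ (m - 1) * (l * S + a ^ (n - 1 - m) * E (n - 1)) = l ^ m * S + l ^ (m - 1) * a ^ (n - m - 1) * P n"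
      unfolding lm[symmetric] En nm by (simp add: algebra_simps)
    hence C: "l ^ m * (\<Sum>j=m+1..n-1. a ^ (j - m - 1) * P j) + l ^ (m - 1) * a ^ (n - m - 1) * P n \<le> l ^ (m - 1) * E m"
      using X unfolding S_def by simp
    have F1: "a * (\<Sum>i=2..m. l ^ (i - 2) * P i) + (l ^ m * (\<Sum>j=m+1..n-1. a ^ (j - m - 1) * P j) + l ^ (m - 1) * a ^ (n - m - 1) * P n) \<le> E 1"
      using A C by linarith
    thus "p powr (\<alpha> / r) * (\<Sum>i=2..m. l ^ (i - 2) * ?R i powr \<alpha>)
      + l ^ m * (\<Sum>j=m+1..n-1. p powr (real (j - m - 1) * \<alpha> / r) * ?R j powr \<alpha>)
      + l ^ (m - 1) * p powr (real (n - m - 1) * \<alpha> / r) * ?R n powr \<alpha> \<le> ?C 1 powr \<alpha>"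
    proof -
      have S1: "(\<Sum>j=m+1..n-1. p powr (real (j - m - 1) * \<alpha> / r) * ?R j powr \<alpha>) = (\<Sum>j=m+1..n-1. a ^ (j - m - 1) * P j)"
        by (intro sum.cong refl) (simp only: pa P_def)
      have S3: "(\<Sum>i=2..m. l ^ (i - 2) * ?R i powr \<alpha>) = (\<Sum>i=2..m. l ^ (i - 2) * P i)"
        by (simp add: P_def)
      have S4: "p powr (\<alpha> / r) = a" by (simp add: a_def \<beta>_def)
      have S5: "?C 1 powr \<alpha> = E 1" "?R n powr \<alpha> = P n" by (simp_all add: E_def P_def)
      show ?thesis using F1 unfolding S1 unfolding S3 S4 S5 pa by (simp add: add.assoc)
    qed
  next
    assume h: "3 \<le> n \<and> (\<forall>i\<in>{2..n-1}. k * ?R i powr r \<le> ?C i powr r)"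
    have A: "a * (\<Sum>i=2..n-1. l ^ (i - 2) * P i) + l ^ (n - 1 - 1) * E (n - 1) \<le> E 1"
    proof (rule chainA[OF l0])
      show "2 \<le> n - 1" using h by linarith
      fix i assume "2 \<le> i" "i \<le> n - 1"
      thus "a * P i + l * E i \<le> E (i - 1)" using h by (intro stepA) auto
    qed
    moreover have "E (n - 1) = P n" using h by (intro lastc) auto
    moreover have "n - 1 - 1 = n - 2" by simp
    ultimately show "p powr (\<alpha> / r) * (\<Sum>i=2..n-1. l ^ (i - 2) * ?R i powr \<alpha>)
      + l ^ (n - 2) * ?R n powr \<alpha> \<le> ?C 1 powr \<alpha>"
      by (simp add: a_def \<beta>_def E_def P_def)
  next
    assume h: "3 \<le> n \<and> (\<forall>j\<in>{2..n-1}. k * ?C j powr r \<le> ?R j powr r)"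
    have B: "l * (\<Sum>j=1+1..n-1. a ^ (j - 1 - 1) * P j) + a ^ (n - 1 - 1) * E (n - 1) \<le> E 1"
    proof (rule chainB[OF a0])
      show "1 \<le> n - 1" using h by linarith
      fix j assume "1 + 1 \<le> j" "j \<le> n - 1"
      thus "l * P j + a * E j \<le> E (j - 1)" using h by (intro stepB) auto
    qed
    moreover have "E (n - 1) = P n" using h by (intro lastc) auto
    moreover have "n - 1 - 1 = n - 2" by simp
    moreover have "(\<Sum>j=1+1..n-1. a ^ (j - 1 - 1) * P j) = (\<Sum>j=2..n-1. a ^ (j - 2) * P j)" by (simp add: numeral_2_eq_2)
    ultimately have F3: "l * (\<Sum>j=2..n-1. a ^ (j - 2) * P j) + a ^ (n - 2) * P n \<le> E 1" by simp
    show "l * (\<Sum>j=2..n-1. p powr (real (j - 2) * \<alpha> / r) * ?R j powr \<alpha>)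
      + p powr (real (n - 2) * \<alpha> / r) * ?R n powr \<alpha> \<le> ?C 1 powr \<alpha>"
    proof -
      have S1: "(\<Sum>j=2..n-1. p powr (real (j - 2) * \<alpha> / r) * ?R j powr \<alpha>) = (\<Sum>j=2..n-1. a ^ (j - 2) * P j)"
        by (intro sum.cong refl) (simp only: pa P_def)
      have S5: "?C 1 powr \<alpha> = E 1" "?R n powr \<alpha> = P n" by (simp_all add: E_def P_def)
      show ?thesis using F3 unfolding S1 unfolding S5 pa by simp
    qed
  qed
qed

end
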